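(* Let $n=2m+1$ with $m\ge1$, let $a,b,c,d\in\mathbb{C}$, and suppose $T_n$ (degree $n$) and $U_{n-2}$ (degree at most $n-2$) satisfy $T_n^2-HU_{n-2}^2=1$ with $$T_n(z)=1-\frac{2(z-d)\prod_{j=1}^{m}(z-x_j)^2}{(a-d)\prod_{j=1}^m(a-x_j)^2}=-1+\frac{2(z-a)(z-b)(z-c)\prod_{j=1}^{m-1}(z-y_j)^2}{(d-a)(d-b)(d-c)\prod_{j=1}^{m-1}(d-y_j)^2}$$ for some $x_1,\dots,x_m,y_1,\dots,y_{m-1}\in\mathbb{C}$. Put $s_k:=\tfrac12\bigl(a^k-b^k-c^k+d^k\bigr)$, $k=1,\dots,2m$, and form $F_k,\mathbf F,\mathbf F_i$ with $\nu=m$, $\mu=m$. Then $\det\mathbf F\ne0$ and $x_1,\dots,x_m$ (with multiplicity) are exactly the zeros of the polynomial $$x^{m}\det\mathbf F+x^{m-1}\det\mathbf F_1+\dots+x\det\mathbf F_{m-1}+\det\mathbf F_{m}.$$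
   Context: $H(z)=(z-a)(z-b)(z-c)(z-d)$. Given complex numbers $s_1,s_2,\dots$, set $F_0:=1$, $F_k:=0$ for $k<0$, and for $k\ge1$, $F_k:=\frac{(-1)^k}{k!}\det M_k$ where $M_k$ is the $k\times k$ matrix with entry $s_{i-j+1}$ for $j\le i$, entry $i$ at position $(i,i+1)$, and $0$ elsewhere. For integers $\nu\ge0,\mu\ge1$, $\mathbf F$ is the $\mu\times\mu$ matrix with $(i,j)$ entry $F_{\nu+i-j}$, and $\mathbf F_i$ ($1\le i\le\mu$) is $\mathbf F$ with its $i$-th column replaced by $(-F_{\nu+1},\dots,-F_{\nu+\mu})^T$. *)

theory Defs
  imports "Jordan_Normal_Form.Determinant" "HOL-Computational_Algebra.Polynomial"
begin

text \<open>The k x k matrix M_k (0-based indices): entry s_(i-j+1) for j <= i (1-based),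
  entry i at position (i,i+1) (1-based), 0 elsewhere.\<close>
definition Mk :: "(nat \<Rightarrow> complex) \<Rightarrow> nat \<Rightarrow> complex mat" where
  "Mk s k = mat k k (\<lambda>(i, j). if j \<le> i then s (i - j + 1)
                              else if j = i + 1 then of_nat (i + 1) else 0)"

definition Fk :: "(nat \<Rightarrow> complex) \<Rightarrow> int \<Rightarrow> complex" where
  "Fk s k = (if k < 0 then 0 else if k = 0 then 1
             else (-1) ^ nat k / fact (nat k) * det (Mk s (nat k)))"

definition Fmat :: "(nat \<Rightarrow> complex) \<Rightarrow> nat \<Rightarrow> nat \<Rightarrow> complex mat" where
  "Fmat s \<nu> \<mu> = mat \<mu> \<mu> (\<lambda>(i, j). Fk s (int \<nu> + int i - int j))"

definition Fmat_col :: "(nat \<Rightarrow> complex) \<Rightarrow> nat \<Rightarrow> nat \<Rightarrow> nat \<Rightarrow> complex mat" where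
  "Fmat_col s \<nu> \<mu> c = mat \<mu> \<mu> (\<lambda>(i, j). if j = c - 1 then - Fk s (int \<nu> + int i + 1)
                                           else Fk s (int \<nu> + int i - int j))"

definition Hpoly :: "complex \<Rightarrow> complex \<Rightarrow> complex \<Rightarrow> complex \<Rightarrow> complex poly" where
  "Hpoly a b c d = [:-a, 1:] * [:-b, 1:] * [:-c, 1:] * [:-d, 1:]"

end

theory Submission
  imports Defs "HOL-Computational_Algebra.Formal_Power_Series" "HOL-Computational_Algebra.Polynomial_FPS"
begin


definition Gm :: "(nat \<Rightarrow> complex) \<Rightarrow> (nat \<Rightarrow> complex) \<Rightarrow> nat \<Rightarrow> complex mat" where
  "Gm s w k = mat k k (\<lambda>(i, j). if i = k - 1 then w j else if j \<le> i then s (i - j + 1)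
                              else if j = i + 1 then of_nat (i + 1) else 0)"

lemma Gm_step:
  "det (Gm s w (Suc (Suc k))) = w (Suc k) * det (Mk s (Suc k)) - of_nat (Suc k) * det (Gm s w (Suc k))"
proof -
  let ?G = "Gm s w (Suc (Suc k))"
  have G: "?G \<in> carrier_mat (Suc (Suc k)) (Suc (Suc k))" by (simp add: Gm_def)
  have "det ?G = (\<Sum>i<Suc (Suc k). ?G $$ (i, Suc k) * cofactor ?G i (Suc k))"
    by (rule laplace_expansion_column[OF G]) simp
  also have "\<dots> = (\<Sum>i<k. ?G $$ (i, Suc k) * cofactor ?G i (Suc k))
      + ?G $$ (k, Suc k) * cofactor ?G k (Suc k) + ?G $$ (Suc k, Suc k) * cofactor ?G (Suc k) (Suc k)"
    by simp
  also have "(\<Sum>i<k. ?G $$ (i, Suc k) * cofactor ?G i (Suc k)) = 0"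
    by (rule sum.neutral) (auto simp: Gm_def)
  also have "?G $$ (k, Suc k) = of_nat (Suc k)" by (simp add: Gm_def)
  also have "?G $$ (Suc k, Suc k) = w (Suc k)" by (simp add: Gm_def)
  also have "mat_delete ?G (Suc k) (Suc k) = Mk s (Suc k)"
    by (rule eq_matI) (auto simp: Gm_def Mk_def mat_delete_def)
  then have "cofactor ?G (Suc k) (Suc k) = det (Mk s (Suc k))"
    by (simp add: cofactor_def)
  also have "mat_delete ?G k (Suc k) = Gm s w (Suc k)"
    by (rule eq_matI) (auto simp: Gm_def Mk_def mat_delete_def)
  then have "cofactor ?G k (Suc k) = - det (Gm s w (Suc k))"
    by (simp add: cofactor_def)
  finally show ?thesis by (simp add: algebra_simps)
qed

lemma Mk_det_F: "det (Mk s k) = (-1)^k * fact k * Fk s (int k)"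
proof (cases "k = 0")
  case True
  then show ?thesis by (simp add: Fk_def Mk_def det_def)
next
  case False
  then show ?thesis by (simp add: Fk_def)
qed

lemma Gm_closed:
  "det (Gm s w (Suc k)) = (-1)^k * fact k * (\<Sum>j\<le>k. w j * Fk s (int j))"
proof (induction k)
  case 0
  have "Gm s w 1 = mat 1 1 (\<lambda>_. w 0)" by (rule eq_matI) (auto simp: Gm_def)
  then show ?case by (simp add: det_def Fk_def sign_def)
next
  case (Suc k)
  show ?case
    unfolding Gm_step Suc Mk_det_F
    by (simp only: sum.atMost_Suc) (simp add: algebra_simps)
qed

lemma newton:
  "of_nat (Suc k) * Fk s (int (Suc k)) = - (\<Sum>j\<le>k. s (Suc k - j) * Fk s (int j))"
proof -
  have "Mk s (Suc k) = Gm s (\<lambda>j. s (Suc k - j)) (Suc k)"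
    by (rule eq_matI) (auto simp: Gm_def Mk_def Suc_diff_le)
  then have "det (Mk s (Suc k)) = (-1)^k * fact k * (\<Sum>j\<le>k. s (Suc k - j) * Fk s (int j))"
    by (simp add: Gm_closed)
  then have "(-1)^(Suc k) * fact (Suc k) * Fk s (int (Suc k)) = (-1)^k * fact k * (\<Sum>j\<le>k. s (Suc k - j) * Fk s (int j))"
    by (simp add: Mk_det_F)
  then have "fact k * (-1)^k * (of_nat (Suc k) * Fk s (int (Suc k)) + (\<Sum>j\<le>k. s (Suc k - j) * Fk s (int j))) = (0::complex)"
    by (simp add: algebra_simps) (metis add.commute add_eq_0_iff)
  moreover have "fact k * (-1)^k \<noteq> (0::complex)" by simp
  ultimately show ?thesis by (simp add: eq_neg_iff_add_eq_0)
qed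


definition Gs :: "complex \<Rightarrow> complex fps" where "Gs z = Abs_fps (\<lambda>k. z ^ k)"
definition Lin :: "complex \<Rightarrow> complex fps" where "Lin z = 1 - fps_const z * fps_X"

lemma Lin_Gs: "Lin z * Gs z = 1"
proof (rule fps_ext)
  fix k show "fps_nth (Lin z * Gs z) k = fps_nth 1 k"
    by (cases k) (simp_all add: Lin_def Gs_def algebra_simps fps_X_mult_nth mult.assoc)
qed

lemma fps_unique_ode:
  fixes u v :: "complex fps"
  assumes "fps_X * fps_deriv u * v = fps_X * fps_deriv v * u"
    and "fps_nth v 0 \<noteq> 0" and "fps_nth u 0 = fps_nth v 0"
  shows "u = v"
proof -
  have "fps_X * (fps_deriv u * v - fps_deriv v * u) = 0"
    using assms(1) by (simp add: algebra_simps)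
  then have e: "fps_deriv u * v - fps_deriv v * u = 0" by simp
  define w where "w = u * inverse v"
  have "fps_deriv w = fps_deriv u * inverse v - u * fps_deriv v * (inverse v)^2"
    by (simp add: w_def fps_inverse_deriv[OF assms(2)] algebra_simps)
  also have "\<dots> = (fps_deriv u * v - fps_deriv v * u) * (inverse v)^2"
  proof -
    have "inverse v * v = 1" using inverse_mult_eq_1[OF assms(2)] .
    then have "fps_deriv u * inverse v = fps_deriv u * v * (inverse v)^2"
      by (simp add: power2_eq_square algebra_simps)
    then show ?thesis by (simp add: algebra_simps)
  qed
  also have "\<dots> = 0" using e by simp
  finally have "w = fps_const (fps_nth w 0)" using fps_deriv_eq_0_iff by blast
  moreover have "fps_nth w 0 = 1" using assms(2,3) by (simp add: w_def)
  ultimately have "w = 1" by simp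
  then have "u * inverse v * v = v" by (simp add: w_def)
  then show ?thesis using inverse_mult_eq_1[OF assms(2)] by (simp add: mult.assoc)
qed

lemma ring_id:
  fixes X f pa pb pc pd :: "'a::comm_ring_1"
  shows "f^2 * (-((1-pb*X)*(1-pc*X)*(1-pd*X) - (1-pa*X)*(1-pc*X)*(1-pd*X) - (1-pa*X)*(1-pb*X)*(1-pd*X) + (1-pa*X)*(1-pb*X)*(1-pc*X))
     + X*(-(pb*(1-pc*X)) - (1-pb*X)*pc)*(1-pa*X)*(1-pd*X)) = X*(-(pa*(1-pd*X)) - (1-pa*X)*pd)*(f^2*(1-pb*X)*(1-pc*X))"
  by (simp add: algebra_simps power2_eq_square)

lemma deriv_Lin2: "fps_deriv (Lin b * Lin c) = -(fps_const b * Lin c) - Lin b * fps_const c"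
  by (simp add: Lin_def algebra_simps)

definition fF :: "(nat \<Rightarrow> complex) \<Rightarrow> complex fps" where "fF s = Abs_fps (\<lambda>k. Fk s (int k))"

lemma fF_ode:
  assumes "s 0 = 0"
  shows "fps_X * fps_deriv (fF s) = - (fF s * Abs_fps s)"
proof (rule fps_ext)
  fix k
  show "fps_nth (fps_X * fps_deriv (fF s)) k = fps_nth (- (fF s * Abs_fps s)) k"
  proof (cases k)
    case 0
    then show ?thesis by (simp add: fps_X_mult_nth fps_mult_nth assms)
  next
    case (Suc k')
    have "(\<Sum>i = 0..Suc k'. Fk s (int i) * s (Suc k' - i)) = (\<Sum>i \<le> k'. Fk s (int i) * s (Suc k' - i))"
      using assms by (simp add: atLeast0AtMost)
    moreover have "fps_nth (fps_X * fps_deriv (fF s)) k = of_nat (Suc k') * Fk s (int (Suc k'))"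
      using Suc by (simp only: fps_X_mult_nth fps_deriv_nth fF_def fps_nth_Abs_fps) simp
    moreover have "fps_nth (- (fF s * Abs_fps s)) k = - (\<Sum>i = 0..Suc k'. Fk s (int i) * s (Suc k' - i))"
      using Suc by (simp only: fps_neg_nth fps_mult_nth fF_def fps_nth_Abs_fps)
    ultimately show ?thesis using newton[of k' s]
      by (simp add: mult.commute)
  qed
qed

lemma fF_square:
  assumes s: "\<And>k. s k = (a ^ k - b ^ k - c ^ k + d ^ k) / 2"
  shows "(fF s)^2 * Lin b * Lin c = Lin a * Lin d"
proof -
  define f where "f = fF s"
  define S where "S = Abs_fps s"
  have s0: "s 0 = 0" using s[of 0] by simp
  have ode: "fps_X * fps_deriv f = - (f * S)" using fF_ode[of s, OF s0] by (simp add: f_def S_def)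
  have S2': "fps_const 2 * S = Gs a - Gs b - Gs c + Gs d"
    by (rule fps_ext) (simp add: S_def Gs_def s)
  have S2: "2 * S = Gs a - Gs b - Gs c + Gs d"
    using S2' by (metis numeral_fps_const)
  have key: "2 * S * (Lin a * Lin b * Lin c * Lin d) =
     Lin b * Lin c * Lin d - Lin a * Lin c * Lin d - Lin a * Lin b * Lin d + Lin a * Lin b * Lin c"
  proof -
    have "2 * S * (Lin a * Lin b * Lin c * Lin d) =
      (Lin a * Gs a) * (Lin b * Lin c * Lin d) - (Lin b * Gs b) * (Lin a * Lin c * Lin d)
      - (Lin c * Gs c) * (Lin a * Lin b * Lin d) + (Lin d * Gs d) * (Lin a * Lin b * Lin c)"
      unfolding S2 by (simp add: algebra_simps)
    then show ?thesis by (simp add: Lin_Gs)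
  qed
  define u where "u = f^2 * Lin b * Lin c"
  define v where "v = Lin a * Lin d"
  have du: "fps_X * fps_deriv u = 2 * f * (fps_X * fps_deriv f) * Lin b * Lin c + f^2 * (fps_X * fps_deriv (Lin b * Lin c))"
    by (simp add: u_def fps_deriv_power algebra_simps power2_eq_square)
  have "fps_X * fps_deriv u * v = f^2 * (- (2 * S * (Lin a * Lin b * Lin c * Lin d)) + fps_X * fps_deriv (Lin b * Lin c) * Lin a * Lin d)"
    unfolding du ode v_def by (simp add: algebra_simps power2_eq_square)
  also have "\<dots> = fps_X * fps_deriv v * u"
    unfolding key deriv_Lin2 u_def v_def deriv_Lin2 using ring_id[of f "fps_const b" fps_X "fps_const c" "fps_const d" "fps_const a"]
    by (simp add: Lin_def mult.assoc)
  finally have "fps_X * fps_deriv u * v = fps_X * fps_deriv v * u" .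
  moreover have "fps_nth v 0 \<noteq> 0" by (simp add: v_def Lin_def)
  moreover have "fps_nth u 0 = fps_nth v 0"
    by (simp add: u_def v_def Lin_def f_def fF_def Fk_def power2_eq_square)
  ultimately have "u = v" by (rule fps_unique_ode)
  then show ?thesis by (simp add: u_def v_def f_def)
qed


lemma poly_eq_nz:
  fixes p q :: "complex poly"
  assumes "\<And>t. t \<noteq> 0 \<Longrightarrow> poly p t = poly q t"
  shows "p = q"
proof (rule ccontr)
  assume "p \<noteq> q"
  then have "p - q \<noteq> 0" by simp
  then have fin: "finite {t. poly (p - q) t = 0}" by (rule poly_roots_finite)
  have "UNIV - {0} \<subseteq> {t. poly (p - q) t = 0}" using assms by auto
  then have "finite (UNIV - {0::complex})" using fin finite_subset by blast
  then show False using infinite_UNIV_char_0[where 'a=complex] by simp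
qed

lemma fps_low_zero:
  fixes E W H :: "complex fps"
  assumes "E * W = fps_X ^ N * H" and "fps_nth W 0 \<noteq> 0" and "k < N"
  shows "fps_nth E k = 0"
proof -
  have "E = E * W * inverse W" using inverse_mult_eq_1[OF assms(2)] by (simp add: mult.assoc mult.commute)
  also have "\<dots> = fps_X ^ N * (H * inverse W)" using assms(1) by (simp add: mult.assoc)
  finally show ?thesis using assms(3) by (simp add: fps_X_power_mult_nth)
qed

lemma mult_low:
  fixes g h :: "complex fps"
  assumes "\<And>i. i < N \<Longrightarrow> fps_nth h i = 0" and "k < N"
  shows "fps_nth (g * h) k = 0"
  using assms by (auto simp: fps_mult_nth intro!: sum.neutral)

definition Lp :: "complex \<Rightarrow> complex poly" where "Lp z = [:1, -z:]"

lemma fps_Lp: "fps_of_poly (Lp z) = Lin z"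
  by (simp add: Lp_def Lin_def fps_of_poly_linear')

lemma degree_Lp: "degree (Lp z) \<le> 1" by (simp add: Lp_def)

lemma pade_core:
  fixes Qp Yp :: "complex poly" and f :: "complex fps"
  assumes m: "m \<ge> 1" and N: "N = 2 * m + 1"
    and dQ: "degree Qp \<le> m" and dY: "degree Yp \<le> m - 1"
    and Q0: "coeff Qp 0 = 1" and Y0: "coeff Yp 0 = 1"
    and c1: "c1 \<noteq> 0"
    and ident: "monom 2 N = smult c1 (Lp d * Qp^2 - Lp a * Lp b * Lp c * Yp^2)"
    and fsq: "f^2 * Lin b * Lin c = Lin a * Lin d" and f0: "fps_nth f 0 = 1"
  shows "\<And>k. k < N \<Longrightarrow> fps_nth (fps_of_poly Qp * f - fps_of_poly (Lp a * Yp)) k = 0"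
proof -
  fix k assume k: "k < N"
  define fQ where "fQ = fps_of_poly Qp"
  define fY where "fY = fps_of_poly Yp"
  define E where "E = fQ * f - Lin a * fY"
  define W where "W = (fQ * f + Lin a * fY) * Lin b * Lin c"
  have "fps_of_poly (monom 2 N) = fps_const c1 * (Lin d * fQ^2 - Lin a * Lin b * Lin c * fY^2)"
    unfolding ident by (simp add: fps_Lp fQ_def fY_def fps_of_poly_diff fps_of_poly_smult fps_of_poly_mult fps_of_poly_power)
  then have id2: "fps_X ^ N * fps_const 2 = fps_const c1 * (Lin d * fQ^2 - Lin a * Lin b * Lin c * fY^2)"
    by (simp add: fps_of_poly_monom mult.commute)
  have "E * W = fQ^2 * (f^2 * Lin b * Lin c) - Lin a^2 * fY^2 * Lin b * Lin c"
    by (simp add: E_def W_def algebra_simps power2_eq_square)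
  also have "\<dots> = Lin a * (Lin d * fQ^2 - Lin a * Lin b * Lin c * fY^2)"
    unfolding fsq by (simp add: algebra_simps power2_eq_square)
  also have "\<dots> = Lin a * (fps_const (inverse c1) * (fps_const c1 * (Lin d * fQ^2 - Lin a * Lin b * Lin c * fY^2)))"
    using c1 by (simp add: mult.assoc[symmetric])
  also have "\<dots> = fps_X ^ N * (fps_const (inverse c1) * fps_const 2 * Lin a)"
    unfolding id2[symmetric] by (simp only: ac_simps)
  finally have EW: "E * W = fps_X ^ N * (fps_const (inverse c1) * fps_const 2 * Lin a)" .
  have "fps_nth W 0 = 2" using Q0 Y0 f0 by (simp add: W_def fQ_def fY_def Lin_def)
  then have "fps_nth E k = 0" using fps_low_zero[OF EW _ k] by simp
  then show "fps_nth (fps_of_poly Qp * f - fps_of_poly (Lp a * Yp)) k = 0"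
    by (simp add: E_def fQ_def fY_def fps_Lp fps_of_poly_mult)
qed


lemma coeff_sys:
  fixes p :: "complex poly"
  assumes "degree p \<le> m"
  shows "fps_nth (fps_of_poly p * f) (m+i+1) = coeff p 0 * fps_nth f (m+i+1) + (\<Sum>j<m. coeff p (Suc j) * fps_nth f (m+i-j))"
proof -
  have "fps_nth (fps_of_poly p * f) (m+i+1) = (\<Sum>j=0..m+i+1. coeff p j * fps_nth f (m+i+1-j))"
    by (simp add: fps_mult_nth)
  also have "\<dots> = (\<Sum>j<Suc m. coeff p j * fps_nth f (m+i+1-j))"
    using assms by (intro sum.mono_neutral_right) (auto simp: coeff_eq_0)
  also have "\<dots> = coeff p 0 * fps_nth f (m+i+1) + (\<Sum>j<m. coeff p (Suc j) * fps_nth f (m+i-j))"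
    by (subst sum.lessThan_Suc_shift) simp
  finally show ?thesis .
qed

lemma nonsing_core:
  fixes Qp Yp Q' :: "complex poly" and f :: "complex fps"
  assumes m: "m \<ge> 1" and N: "N = 2 * m + 1"
    and dQ: "degree Qp \<le> m" and dY: "degree Yp \<le> m - 1"
    and Q0: "coeff Qp 0 = 1" and Y0: "coeff Yp 0 = 1"
    and c1: "c1 \<noteq> 0"
    and ident: "monom 2 N = smult c1 (Lp d * Qp^2 - Lp a * Lp b * Lp c * Yp^2)"
    and fsq: "f^2 * Lin b * Lin c = Lin a * Lin d" and f0: "fps_nth f 0 = 1"
    and dQ': "degree Q' \<le> m" and Q'0: "coeff Q' 0 = 0"
    and sys: "\<And>i. i < m \<Longrightarrow> fps_nth (fps_of_poly Q' * f) (m+i+1) = 0"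
  shows "Q' = 0"
proof -
  define P where "P = Lp a * Yp"
  define E where "E = fps_of_poly Qp * f - fps_of_poly P"
  have E0: "\<And>k. k < N \<Longrightarrow> fps_nth E k = 0"
    unfolding E_def P_def by (rule pade_core[OF m N dQ dY Q0 Y0 c1 ident fsq f0])
  define P' where "P' = (\<Sum>k\<le>m. monom (fps_nth (fps_of_poly Q' * f) k) k)"
  have cP': "coeff P' k = (if k \<le> m then fps_nth (fps_of_poly Q' * f) k else 0)" for k
    by (simp add: P'_def coeff_sum coeff_monom)
  have dP': "degree P' \<le> m"
    by (rule degree_le) (simp add: cP')
  define E' where "E' = fps_of_poly Q' * f - fps_of_poly P'"
  have E'0: "fps_nth E' k = 0" if "k < N" for k
  proof (cases "k \<le> m")
    case True then show ?thesis by (simp add: E'_def cP')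
  next
    case False
    define i where "i = k - m - 1"
    have "k = m + i + 1" "i < m" using False that N by (auto simp: i_def)
    then show ?thesis using sys[of i] False by (simp add: E'_def cP')
  qed
  define Z where "Z = Qp * P' - Q' * P"
  have "fps_of_poly Z = fps_of_poly Q' * E - fps_of_poly Qp * E'"
    by (simp add: Z_def E_def E'_def fps_of_poly_diff fps_of_poly_mult algebra_simps)
  then have Zlow: "coeff Z k = 0" if "k < N" for k
    using mult_low[OF E0 that, of "fps_of_poly Q'"] mult_low[OF E'0 that, of "fps_of_poly Qp"]
    by (metis fps_of_poly_nth fps_sub_nth diff_self)
  have dP: "degree P \<le> m"
  proof -
    have "degree P \<le> degree (Lp a) + degree Yp" unfolding P_def by (rule degree_mult_le)
    then show ?thesis using degree_Lp[of a] dY m by linarith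
  qed
  have dZ: "degree Z \<le> 2 * m"
  proof -
    have "degree (Qp * P') \<le> 2 * m" using degree_mult_le[of Qp P'] dQ dP' by linarith
    moreover have "degree (Q' * P) \<le> 2 * m" using degree_mult_le[of Q' P] dQ' dP by linarith
    ultimately show ?thesis unfolding Z_def using degree_diff_le by blast
  qed
  have "Z = 0"
  proof (rule poly_eqI)
    fix k show "coeff Z k = coeff 0 k"
      using Zlow[of k] dZ N by (cases "k < N") (auto simp: coeff_eq_0)
  qed
  then have QP': "Qp * P' = Q' * P" by (simp add: Z_def)
  define R where "R = smult c1 (Lp d * Qp * Q' - Lp b * Lp c * Yp * P')"
  have QR: "Qp * R = Q' * monom 2 N"
  proof -
    have "Qp * R = smult c1 (Lp d * Qp^2 * Q' - Lp b * Lp c * Yp * (Qp * P'))"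
      by (simp add: R_def algebra_simps power2_eq_square)
    also have "\<dots> = Q' * smult c1 (Lp d * Qp^2 - Lp a * Lp b * Lp c * Yp^2)"
      unfolding QP' P_def by (simp add: algebra_simps power2_eq_square)
    finally show ?thesis unfolding ident .
  qed
  have Rlow: "coeff R k = 0" if "k < N" for k
  proof -
    have "fps_of_poly R * fps_of_poly Qp = fps_X ^ N * (fps_const 2 * fps_of_poly Q')"
      using arg_cong[OF QR, of fps_of_poly] by (simp add: fps_of_poly_mult fps_of_poly_monom algebra_simps)
    from fps_low_zero[OF this _ that] Q0 show ?thesis by simp
  qed
  have dR: "degree R \<le> N"
  proof -
    have "degree (Lp d * Qp * Q') \<le> N"
      using degree_mult_le[of "Lp d * Qp" Q'] degree_mult_le[of "Lp d" Qp] degree_Lp[of d] dQ dQ' N by linarith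
    moreover have "degree (Lp b * Lp c * Yp * P') \<le> N"
      using degree_mult_le[of "Lp b * Lp c * Yp" P'] degree_mult_le[of "Lp b * Lp c" Yp]
        degree_mult_le[of "Lp b" "Lp c"] degree_Lp[of b] degree_Lp[of c] dY dP' N m by linarith
    ultimately show ?thesis unfolding R_def using degree_diff_le degree_smult_le order_trans by blast
  qed
  have Rm: "R = monom (coeff R N) N"
  proof (rule poly_eqI)
    fix k show "coeff R k = coeff (monom (coeff R N) N) k"
      using Rlow[of k] dR by (cases "k < N"; cases "k = N") (auto simp: coeff_monom coeff_eq_0)
  qed
  have "coeff (Qp * R) N = coeff R N"
    by (subst Rm, subst mult.commute) (simp add: coeff_monom_mult Q0)
  moreover have "coeff (Q' * monom 2 N) N = 0"
    by (subst mult.commute) (simp add: coeff_monom_mult Q'0)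
  ultimately have "coeff R N = 0" using QR by simp
  then have "R = 0" using Rm by simp
  then have "Q' * monom 2 N = 0" using QR by simp
  then show ?thesis by simp
qed


lemma ident_lemma:
  fixes Xz Yz T :: "complex poly"
  assumes m: "m \<ge> 1" and N: "N = 2 * m + 1"
    and T1: "T = 1 - smult c1 ([:-d, 1:] * Xz^2)"
    and T2: "T = -1 + smult c2 ([:-a, 1:] * [:-b, 1:] * [:-c, 1:] * Yz^2)"
    and dX: "degree Xz = m" and dY: "degree Yz = m - 1"
  shows "monom 2 N = smult c1 (Lp d * (reflect_poly Xz)^2) + smult c2 (Lp a * Lp b * Lp c * (reflect_poly Yz)^2)"
proof (rule poly_eq_nz)
  fix t :: complex assume t: "t \<noteq> 0"
  define z where "z = inverse t"
  have tz: "t * z = 1" using t by (simp add: z_def)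
  have e2: "smult c2 ([:-a, 1:] * [:-b, 1:] * [:-c, 1:] * Yz^2) = T + 1" using T2 by simp
  have e1: "smult c1 ([:-d, 1:] * Xz^2) = 1 - T" using T1 by simp
  have "smult c1 ([:-d, 1:] * Xz^2) + smult c2 ([:-a, 1:] * [:-b, 1:] * [:-c, 1:] * Yz^2) = 2"
    unfolding e1 e2 by simp
  then have "poly (smult c1 ([:-d, 1:] * Xz^2) + smult c2 ([:-a, 1:] * [:-b, 1:] * [:-c, 1:] * Yz^2)) z = 2"
    by simp
  then have ev: "c1 * ((z - d) * poly Xz z ^ 2) + c2 * ((z - a) * (z - b) * (z - c) * poly Yz z ^ 2) = 2"
    by (simp add: algebra_simps)
  have tN1: "t ^ N = t * t ^ m * t ^ m" using N by (simp add: power_add mult_2 power_mult_distrib[symmetric] power2_eq_square[symmetric] power_mult[symmetric] mult.commute)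
  have tN2: "t ^ N = t * t * t * t ^ (m - 1) * t ^ (m - 1)"
  proof -
    have "N = 3 + (m - 1) + (m - 1)" using N m by simp
    then have "t ^ N = t ^ 3 * t ^ (m - 1) * t ^ (m - 1)" by (simp only: power_add)
    then show ?thesis by (simp add: power3_eq_cube)
  qed
  have pX: "poly (reflect_poly Xz) t = t ^ m * poly Xz z" using poly_reflect_poly_nz[OF t] dX by (simp add: z_def)
  have pY: "poly (reflect_poly Yz) t = t ^ (m - 1) * poly Yz z" using poly_reflect_poly_nz[OF t] dY by (simp add: z_def)
  have L: "\<And>w. poly (Lp w) t = t * (z - w)" using tz by (simp add: Lp_def algebra_simps)
  have "poly (monom 2 N) t = t ^ N * 2" by (simp add: poly_monom)
  also have "\<dots> = t ^ N * (c1 * ((z - d) * poly Xz z ^ 2)) + t ^ N * (c2 * ((z - a) * (z - b) * (z - c) * poly Yz z ^ 2))"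
    unfolding ev[symmetric] by (simp add: algebra_simps)
  also have "t ^ N * (c1 * ((z - d) * poly Xz z ^ 2)) = c1 * ((t * (z - d)) * (t ^ m * poly Xz z) ^ 2)"
    unfolding tN1 by (simp add: algebra_simps power2_eq_square)
  also have "t ^ N * (c2 * ((z - a) * (z - b) * (z - c) * poly Yz z ^ 2)) =
      c2 * ((t * (z - a)) * (t * (z - b)) * (t * (z - c)) * (t ^ (m - 1) * poly Yz z) ^ 2)"
    unfolding tN2 by (simp add: algebra_simps power2_eq_square)
  finally show "poly (monom 2 N) t = poly (smult c1 (Lp d * (reflect_poly Xz)^2) + smult c2 (Lp a * Lp b * Lp c * (reflect_poly Yz)^2)) t"
    by (simp add: pX pY L)
qed


lemma lin_prod_degree:
  fixes x :: "nat \<Rightarrow> complex"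
  assumes "finite A"
  shows "degree (\<Prod>j\<in>A. [:-x j, 1:]) = card A \<and> lead_coeff (\<Prod>j\<in>A. [:-x j, 1:]) = 1"
proof
  show "degree (\<Prod>j\<in>A. [:-x j, 1:]) = card A"
    by (subst degree_prod_sum_eq) (auto simp: assms)
  show "lead_coeff (\<Prod>j\<in>A. [:-x j, 1:]) = 1"
    by (simp add: lead_coeff_prod)
qed

lemma lin_prod_order:
  fixes x :: "nat \<Rightarrow> complex"
  assumes "finite A"
  shows "order z (\<Prod>j\<in>A. [:-x j, 1:]) = card {j \<in> A. x j = z}"
  using assms
proof (induction A rule: finite_induct)
  case empty
  then show ?case by (simp add: order_0I)
next
  case (insert j A)
  have p0: "(\<Prod>j\<in>A. [:-x j, 1:]) \<noteq> 0" using insert.hyps(1) by (simp add: prod_zero_iff)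
  have l0: "[:-x j, 1:] \<noteq> 0" by simp
  have nz: "[:-x j, 1:] * (\<Prod>j\<in>A. [:-x j, 1:]) \<noteq> 0" using p0 l0 no_zero_divisors by blast
  have o1: "order z [:-x j, 1:] = (if x j = z then 1 else 0)"
  proof (cases "x j = z")
    case True then show ?thesis using order_power_n_n[of z 1] by simp
  next
    case False then show ?thesis by (simp add: order_0I)
  qed
  have "{i \<in> insert j A. x i = z} = (if x j = z then insert j {i \<in> A. x i = z} else {i \<in> A. x i = z})"
    by auto
  then have "card {i \<in> insert j A. x i = z} = (if x j = z then 1 else 0) + card {i \<in> A. x i = z}"
    using insert.hyps by auto
  then show ?case using insert order_mult[OF nz] o1 by simp
qed



lemma smult_sum_r: "smult c (sum f A) = (\<Sum>x\<in>A. smult c (f x))"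
  by (induction A rule: infinite_finite_induct) (simp_all add: smult_add_right)

theorem theorem1:
  fixes m n :: nat and a b c d :: complex and T U :: "complex poly"
    and x y :: "nat \<Rightarrow> complex" and s :: "nat \<Rightarrow> complex"
  assumes "m \<ge> 1" and "n = 2 * m + 1"
    and "degree T = n" and "degree U \<le> n - 2"
    and "T ^ 2 - Hpoly a b c d * U ^ 2 = 1"
    and "T = 1 - smult (2 / ((a - d) * (\<Prod>j=1..m. (a - x j) ^ 2)))
                  ([:-d, 1:] * (\<Prod>j=1..m. [:-x j, 1:] ^ 2))"
    and "T = -1 + smult (2 / ((d - a) * (d - b) * (d - c) * (\<Prod>j=1..m-1. (d - y j) ^ 2)))
                  ([:-a, 1:] * [:-b, 1:] * [:-c, 1:] * (\<Prod>j=1..m-1. [:-y j, 1:] ^ 2))"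
    and "\<And>k. s k = (a ^ k - b ^ k - c ^ k + d ^ k) / 2"
  shows "det (Fmat s m m) \<noteq> 0 \<and>
         (\<forall>z. order z (monom (det (Fmat s m m)) m
                        + (\<Sum>i=1..m. monom (det (Fmat_col s m m i)) (m - i)))
              = card {j \<in> {1..m}. x j = z})"
proof -
  note m = assms(1)
  define Xz where "Xz = (\<Prod>j=1..m. [:-x j, 1:])"
  define Yz where "Yz = (\<Prod>j=1..m-1. [:-y j, 1:])"
  define c1 where "c1 = 2 / ((a - d) * (\<Prod>j=1..m. (a - x j) ^ 2))"
  define c2 where "c2 = 2 / ((d - a) * (d - b) * (d - c) * (\<Prod>j=1..m-1. (d - y j) ^ 2))"
  define N where "N = 2 * m + 1"
  define Qp where "Qp = reflect_poly Xz"
  define Yp where "Yp = reflect_poly Yz"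
  have T1: "T = 1 - smult c1 ([:-d, 1:] * Xz^2)"
    using assms(6) by (simp add: c1_def Xz_def prod_power_distrib)
  have T2: "T = -1 + smult c2 ([:-a, 1:] * [:-b, 1:] * [:-c, 1:] * Yz^2)"
    using assms(7) by (simp add: c2_def Yz_def prod_power_distrib)
  have dX: "degree Xz = m" and lX: "lead_coeff Xz = 1"
    using lin_prod_degree[of "{1..m}" x] by (auto simp: Xz_def)
  have dY: "degree Yz = m - 1" and lY: "lead_coeff Yz = 1"
    using lin_prod_degree[of "{1..m-1}" y] by (auto simp: Yz_def)
  have c1: "c1 \<noteq> 0"
  proof
    assume "c1 = 0"
    then have "T = 1" using T1 by simp
    then show False using assms(2,3) by simp
  qed
  have I0: "monom 2 N = smult c1 (Lp d * Qp^2) + smult c2 (Lp a * Lp b * Lp c * Yp^2)"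
    unfolding Qp_def Yp_def by (rule ident_lemma[OF m N_def T1 T2 dX dY])
  have "poly (monom 2 N) 0 = poly (smult c1 (Lp d * Qp^2) + smult c2 (Lp a * Lp b * Lp c * Yp^2)) 0"
    by (simp only: I0)
  then have "0 = c1 + c2" using lX lY by (simp add: N_def poly_monom Qp_def Yp_def Lp_def)
  then have c2: "c2 = - c1" by (simp add: eq_neg_iff_add_eq_0 add.commute)
  have ident: "monom 2 N = smult c1 (Lp d * Qp^2 - Lp a * Lp b * Lp c * Yp^2)"
    using I0 by (simp add: c2 smult_diff_right)
  define f where "f = fF s"
  have fsq: "f^2 * Lin b * Lin c = Lin a * Lin d" unfolding f_def by (rule fF_square[OF assms(8)])
  have f0: "fps_nth f 0 = 1" by (simp add: f_def fF_def Fk_def)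
  have fnth: "\<And>k. fps_nth f k = Fk s (int k)" by (simp add: f_def fF_def)
  have dQ: "degree Qp \<le> m" using degree_reflect_poly_le[of Xz] dX by (simp add: Qp_def)
  have dYp: "degree Yp \<le> m - 1" using degree_reflect_poly_le[of Yz] dY by (simp add: Yp_def)
  have Q0: "coeff Qp 0 = 1" using lX by (simp add: Qp_def)
  have Y0: "coeff Yp 0 = 1" using lY by (simp add: Yp_def)
  note pade = pade_core[OF m N_def dQ dYp Q0 Y0 c1 ident fsq f0]
  note nonsing = nonsing_core[OF m N_def dQ dYp Q0 Y0 c1 ident fsq f0]
  define Fm where "Fm = Fmat s m m"
  have Fm: "Fm \<in> carrier_mat m m" by (simp add: Fm_def Fmat_def)
  have Fm_idx: "\<And>i j. i < m \<Longrightarrow> j < m \<Longrightarrow> Fm $$ (i, j) = Fk s (int m + int i - int j)"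
    by (simp add: Fm_def Fmat_def)
  have mv: "(Fm *\<^sub>v v) $ i = (\<Sum>j<m. Fk s (int m + int i - int j) * v $ j)"
    if "i < m" "v \<in> carrier_vec m" for v i
    using that Fm by (simp add: scalar_prod_def Fm_idx atLeast0LessThan)
  have sys_gen: "fps_nth (fps_of_poly p * f) (m+i+1) = coeff p 0 * Fk s (int m + int i + 1)
       + (\<Sum>j<m. Fk s (int m + int i - int j) * coeff p (Suc j))"
    if "degree p \<le> m" for p i
  proof -
    have "(\<Sum>j<m. coeff p (Suc j) * fps_nth f (m+i-j)) = (\<Sum>j<m. Fk s (int m + int i - int j) * coeff p (Suc j))"
      by (rule sum.cong) (auto simp: fnth of_nat_diff)
    then show ?thesis using coeff_sys[OF that, of f i] by (simp add: fnth add.assoc) (simp add: ac_simps)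
  qed
  define qv where "qv = vec m (\<lambda>j. coeff Qp (Suc j))"
  have qv: "qv \<in> carrier_vec m" by (simp add: qv_def)
  have sysQ: "Fm *\<^sub>v qv = vec m (\<lambda>i. - Fk s (int m + int i + 1))"
  proof (rule eq_vecI)
    show "dim_vec (Fm *\<^sub>v qv) = dim_vec (vec m (\<lambda>i. - Fk s (int m + int i + 1)))" using Fm by simp
    fix i assume "i < dim_vec (vec m (\<lambda>i. - Fk s (int m + int i + 1)))"
    then have i: "i < m" by simp
    have lt: "m + i + 1 < N" using i by (simp add: N_def)
    have "coeff (Lp a * Yp) (m + i + 1) = 0"
    proof (rule coeff_eq_0)
      have "degree (Lp a * Yp) \<le> degree (Lp a) + degree Yp" by (rule degree_mult_le)
      then show "degree (Lp a * Yp) < m + i + 1" using degree_Lp[of a] dYp m by linarith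
    qed
    then have "fps_nth (fps_of_poly Qp * f) (m+i+1) = 0" using pade[OF lt] by simp
    then have "Fk s (int m + int i + 1) + (\<Sum>j<m. Fk s (int m + int i - int j) * coeff Qp (Suc j)) = 0"
      using sys_gen[OF dQ, of i] Q0 by simp
    then show "(Fm *\<^sub>v qv) $ i = vec m (\<lambda>i. - Fk s (int m + int i + 1)) $ i"
      using i mv[OF i qv] by (simp add: qv_def eq_neg_iff_add_eq_0 add.commute)
  qed
  have detne: "det Fm \<noteq> 0"
  proof
    assume "det Fm = 0"
    then obtain v where v: "v \<in> carrier_vec m" "v \<noteq> 0\<^sub>v m" "Fm *\<^sub>v v = 0\<^sub>v m"
      using det_0_iff_vec_prod_zero[OF Fm] by blast
    define Q' where "Q' = (\<Sum>j<m. monom (v $ j) (Suc j))"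
    have cQ': "coeff Q' k = (if 1 \<le> k \<and> k \<le> m then v $ (k - 1) else 0)" for k
    proof -
      have "coeff Q' k = (\<Sum>j<m. if Suc j = k then v $ j else 0)"
        by (simp add: Q'_def coeff_sum coeff_monom)
      also have "\<dots> = (if 1 \<le> k \<and> k \<le> m then v $ (k - 1) else 0)"
      proof (cases "1 \<le> k \<and> k \<le> m")
        case True
        then have "(\<Sum>j<m. if Suc j = k then v $ j else 0) = (\<Sum>j<m. if j = k - 1 then v $ j else 0)"
          by (intro sum.cong) auto
        also have "\<dots> = v $ (k - 1)" using True by (subst sum.delta) auto
        finally show ?thesis using True by simp
      next
        case False
        then show ?thesis by (intro trans[OF sum.neutral]) auto
      qed
      finally show ?thesis .
    qed
    have dQ': "degree Q' \<le> m" by (rule degree_le) (simp add: cQ')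
    have Q'0: "coeff Q' 0 = 0" by (simp add: cQ')
    have sys': "fps_nth (fps_of_poly Q' * f) (m+i+1) = 0" if i: "i < m" for i
    proof -
      have "fps_nth (fps_of_poly Q' * f) (m+i+1) = (\<Sum>j<m. Fk s (int m + int i - int j) * v $ j)"
        using sys_gen[OF dQ', of i] by (simp add: Q'0 cQ')
      also have "\<dots> = (Fm *\<^sub>v v) $ i" using mv[OF i v(1)] by simp
      also have "\<dots> = 0" using v(3) i by simp
      finally show ?thesis .
    qed
    have "Q' = 0" by (rule nonsing[OF dQ' Q'0 sys'])
    have "v $ j = 0" if "j < m" for j
    proof -
      have "coeff Q' (Suc j) = v $ j" using that by (simp add: cQ')
      then show ?thesis using \<open>Q' = 0\<close> by simp
    qed
    then have "v = 0\<^sub>v m"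
      using v(1) by (intro eq_vecI) auto
    then show False using v(2) by simp
  qed
  have detcol: "det (Fmat_col s m m i) = coeff Qp i * det Fm" if i: "i \<in> {1..m}" for i
  proof -
    have "Fmat_col s m m i = replace_col Fm (vec m (\<lambda>i. - Fk s (int m + int i + 1))) (i - 1)"
      using Fm by (intro eq_matI) (auto simp: Fmat_col_def replace_col_def Fm_idx)
    moreover have "det (replace_col Fm (vec m (\<lambda>i. - Fk s (int m + int i + 1))) (i - 1)) = qv $ (i - 1) * det Fm"
    proof -
      have "i - 1 < m" using i by auto
      then show ?thesis using cramer_lemma_mat[OF Fm qv, of "i - 1", unfolded sysQ] by simp
    qed
    moreover have "qv $ (i - 1) = coeff Qp i" using i by (auto simp: qv_def)
    ultimately show ?thesis by simp
  qed
  define \<Delta> where "\<Delta> = det Fm"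
  have cQ: "coeff Qp i = coeff Xz (m - i)" if "i \<le> m" for i
    using that dX by (simp add: Qp_def coeff_reflect_poly)
  have "(\<Sum>i=1..m. monom (det (Fmat_col s m m i)) (m - i)) = (\<Sum>i=1..m. smult \<Delta> (monom (coeff Xz (m - i)) (m - i)))"
    by (rule sum.cong) (auto simp: detcol cQ \<Delta>_def smult_monom mult.commute)
  also have "\<dots> = (\<Sum>k<m. smult \<Delta> (monom (coeff Xz k) k))"
    by (rule sum.reindex_bij_witness[of _ "\<lambda>k. m - k" "\<lambda>i. m - i"]) auto
  finally have S: "monom \<Delta> m + (\<Sum>i=1..m. monom (det (Fmat_col s m m i)) (m - i)) = smult \<Delta> Xz"
  proof -
    assume h: "(\<Sum>i=1..m. monom (det (Fmat_col s m m i)) (m - i)) = (\<Sum>k<m. smult \<Delta> (monom (coeff Xz k) k))"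
    have "smult \<Delta> Xz = smult \<Delta> (\<Sum>k\<le>m. monom (coeff Xz k) k)"
      using poly_as_sum_of_monoms'[of Xz m] dX by simp
    also have "\<dots> = smult \<Delta> (monom (coeff Xz m) m) + (\<Sum>k<m. smult \<Delta> (monom (coeff Xz k) k))"
      by (simp add: lessThan_Suc_atMost[symmetric] smult_add_right smult_sum_r add.commute)
    also have "coeff Xz m = 1" using lX dX by simp
    finally show ?thesis using h by (simp add: smult_monom)
  qed
  show ?thesis
  proof
    show "det (Fmat s m m) \<noteq> 0" using detne by (simp add: Fm_def)
    show "\<forall>z. order z (monom (det (Fmat s m m)) m + (\<Sum>i=1..m. monom (det (Fmat_col s m m i)) (m - i)))
              = card {j \<in> {1..m}. x j = z}"
    proof
      fix z
      have "order z (monom (det (Fmat s m m)) m + (\<Sum>i=1..m. monom (det (Fmat_col s m m i)) (m - i)))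
          = order z (smult \<Delta> Xz)" using S by (simp add: \<Delta>_def Fm_def)
      also have "\<dots> = order z Xz" using detne by (simp add: order_smult \<Delta>_def)
      also have "\<dots> = card {j \<in> {1..m}. x j = z}" unfolding Xz_def by (rule lin_prod_order) simp
      finally show "order z (monom (det (Fmat s m m)) m + (\<Sum>i=1..m. monom (det (Fmat_col s m m i)) (m - i)))
              = card {j \<in> {1..m}. x j = z}" .
    qed
  qed
qed

end
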